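(* Let $\mathbf{X}$ be a finitely supported real random variable with $\mathbf{E}[\mathbf{X}]=0$ and $\mathrm{Var}[\mathbf{X}]=1$, and let $\lambda$ be the minimum probability that $\mathbf{X}$ puts on any point of its support. Suppose $f:\mathbb{R}^n\to\mathbb{R}$ is a multilinear polynomial of degree at most $d\ge1$ with $\|f\|_2=1$, and let $t_0:=(2e/\lambda)^d$. Then \[ \mathbf{E}_{\mathbf{x}\sim\mathbf{X}^{\otimes n}}\big[f(\mathbf{x})^2\cdot\mathbf{1}_{\{|f(\mathbf{x})|>t_0\}}\big]\le 0.52 . \]
   Context: $\|f\|_2=\mathbf{E}_{\mathbf{x}\sim\mathbf{X}^{\otimes n}}[f(\mathbf{x})^2]^{1/2}$, where $\mathbf{X}^{\otimes n}$ is a vector of $n$ i.i.d. copies of $\mathbf{X}$. *)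

theory Defs
  imports "HOL-Probability.Probability"
begin

definition multilinear_poly :: "nat \<Rightarrow> nat \<Rightarrow> (nat set \<Rightarrow> real) \<Rightarrow> (nat \<Rightarrow> real) \<Rightarrow> real" where
  "multilinear_poly n d c x = (\<Sum>S\<in>{S. S \<subseteq> {..<n} \<and> card S \<le> d}. c S * (\<Prod>i\<in>S. x i))"

definition is_multilinear_deg_le :: "nat \<Rightarrow> nat \<Rightarrow> ((nat \<Rightarrow> real) \<Rightarrow> real) \<Rightarrow> bool" where
  "is_multilinear_deg_le n d f \<longleftrightarrow> (\<exists>c. \<forall>x. f x = multilinear_poly n d c x)"

text \<open>Product distribution X^{\<otimes> n} on vectors indexed by {..<n} (coordinates \<ge> n fixed to 0).\<close>
definition prod_dist :: "real pmf \<Rightarrow> nat \<Rightarrow> (nat \<Rightarrow> real) pmf" where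
  "prod_dist X n = Pi_pmf {..<n} 0 (\<lambda>_. X)"

definition L2_norm :: "real pmf \<Rightarrow> nat \<Rightarrow> ((nat \<Rightarrow> real) \<Rightarrow> real) \<Rightarrow> real" where
  "L2_norm X n f = sqrt (measure_pmf.expectation (prod_dist X n) (\<lambda>x. (f x)^2))"

definition min_atom :: "real pmf \<Rightarrow> real" where
  "min_atom X = Min ((pmf X) ` set_pmf X)"

end

theory Submission
  imports Defs
begin

abbreviation EE :: "'a pmf \<Rightarrow> ('a \<Rightarrow> real) \<Rightarrow> real" where
  "EE M f \<equiv> measure_pmf.expectation M f"

lemma ee_sum:
  assumes "finite (set_pmf M)"
  shows "EE M f = (\<Sum>a\<in>set_pmf M. f a * pmf M a)"
  by (rule integral_measure_pmf_real) (use assms in auto)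

lemma ee_const:
  assumes "finite (set_pmf M)"
  shows "EE M (\<lambda>_. c) = c"
  by simp

lemma ee_pair:
  assumes "finite (set_pmf A)" "finite (set_pmf B)"
  shows "EE (pair_pmf A B) G = EE B (\<lambda>b. EE A (\<lambda>a. G (a,b)))"
proof -
  have "EE (pair_pmf A B) G = (\<Sum>z\<in>set_pmf A \<times> set_pmf B. G z * pmf (pair_pmf A B) z)"
    using assms by (subst ee_sum) auto
  also have "\<dots> = (\<Sum>a\<in>set_pmf A. \<Sum>b\<in>set_pmf B. G (a,b) * (pmf A a * pmf B b))"
    by (subst sum.cartesian_product) (auto intro!: sum.cong simp: pmf_pair)
  also have "\<dots> = (\<Sum>b\<in>set_pmf B. (\<Sum>a\<in>set_pmf A. G (a,b) * pmf A a) * pmf B b)"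
    by (subst sum.swap) (simp add: sum_distrib_right mult.assoc)
  also have "\<dots> = EE B (\<lambda>b. EE A (\<lambda>a. G (a,b)))"
    using assms by (simp add: ee_sum)
  finally show ?thesis .
qed

lemma ee_mono:
  assumes "finite (set_pmf M)" "\<And>x. x \<in> set_pmf M \<Longrightarrow> f x \<le> g x"
  shows "EE M f \<le> EE M g"
  using assms by (simp add: ee_sum sum_mono mult_right_mono)

lemma ee_add:
  assumes "finite (set_pmf M)"
  shows "EE M (\<lambda>x. f x + g x) = EE M f + EE M g"
  using assms by (simp add: ee_sum sum.distrib algebra_simps)

lemma ee_cmult:
  assumes "finite (set_pmf M)"
  shows "EE M (\<lambda>x. c * f x) = c * EE M f"
  using assms by (simp add: ee_sum sum_distrib_left algebra_simps)

lemma ee_nonneg: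
  assumes "finite (set_pmf M)" "\<And>x. x \<in> set_pmf M \<Longrightarrow> 0 \<le> f x"
  shows "0 \<le> EE M f"
  using assms by (simp add: ee_sum sum_nonneg)

lemma ee_CS:
  assumes "finite (set_pmf M)"
  shows "(EE M (\<lambda>x. u x * v x))\<^sup>2 \<le> EE M (\<lambda>x. (u x)\<^sup>2) * EE M (\<lambda>x. (v x)\<^sup>2)"
proof -
  let ?S = "set_pmf M"
  define a where "a = (\<lambda>i. u i * sqrt (pmf M i))"
  define b where "b = (\<lambda>i. v i * sqrt (pmf M i))"
  have sq: "sqrt (pmf M i) * sqrt (pmf M i) = pmf M i" for i
    by simp
  have ab: "a i * b i = u i * v i * pmf M i" for i
  proof -
    have "a i * b i = u i * v i * (sqrt (pmf M i) * sqrt (pmf M i))"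
      unfolding a_def b_def by (simp only: ac_simps)
    then show ?thesis by (simp only: sq)
  qed
  have aa: "(a i)\<^sup>2 = (u i)\<^sup>2 * pmf M i" for i
  proof -
    have "(a i)\<^sup>2 = u i * u i * (sqrt (pmf M i) * sqrt (pmf M i))"
      unfolding a_def power2_eq_square by (simp only: ac_simps)
    then show ?thesis by (simp only: sq power2_eq_square)
  qed
  have bb: "(b i)\<^sup>2 = (v i)\<^sup>2 * pmf M i" for i
  proof -
    have "(b i)\<^sup>2 = v i * v i * (sqrt (pmf M i) * sqrt (pmf M i))"
      unfolding b_def power2_eq_square by (simp only: ac_simps)
    then show ?thesis by (simp only: sq power2_eq_square)
  qed
  have "(\<Sum>i\<in>?S. a i * b i)\<^sup>2 \<le> (\<Sum>i\<in>?S. (a i)\<^sup>2) * (\<Sum>i\<in>?S. (b i)\<^sup>2)"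
    by (rule Cauchy_Schwarz_ineq_sum)
  then show ?thesis using assms by (simp only: ee_sum ab aa bb)
qed

lemma finite_prod_dist:
  assumes "finite (set_pmf X)"
  shows "finite (set_pmf (prod_dist X n))"
proof (induction n)
  case 0
  then show ?case by (simp add: prod_dist_def)
next
  case (Suc n)
  have "prod_dist X (Suc n) = map_pmf (\<lambda>(y,f). f(n:=y)) (pair_pmf X (prod_dist X n))"
    unfolding prod_dist_def lessThan_Suc by (rule Pi_pmf_insert) auto
  then show ?case using Suc assms by simp
qed

lemma prod_dist_step:
  assumes "finite (set_pmf X)"
  shows "EE (prod_dist X (Suc n)) F = EE (prod_dist X n) (\<lambda>x. EE X (\<lambda>y. F (x(n:=y))))"
proof -
  have "prod_dist X (Suc n) = map_pmf (\<lambda>(y,f). f(n:=y)) (pair_pmf X (prod_dist X n))"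
    unfolding prod_dist_def lessThan_Suc by (rule Pi_pmf_insert) auto
  then have "EE (prod_dist X (Suc n)) F = EE (pair_pmf X (prod_dist X n)) (\<lambda>(y,f). F (f(n:=y)))"
    by (simp add: case_prod_unfold)
  also have "\<dots> = EE (prod_dist X n) (\<lambda>x. EE X (\<lambda>y. F (x(n:=y))))"
    by (subst ee_pair) (use assms finite_prod_dist in auto)
  finally show ?thesis .
qed

lemma mp_upd:
  "multilinear_poly n d c (x(n:=y)) = multilinear_poly n d c x"
  unfolding multilinear_poly_def
proof (rule sum.cong[OF refl])
  fix S assume "S \<in> {S. S \<subseteq> {..<n} \<and> card S \<le> d}"
  then have "\<And>i. i \<in> S \<Longrightarrow> i \<noteq> n" by auto
  then have "(\<Prod>i\<in>S. (x(n:=y)) i) = (\<Prod>i\<in>S. x i)" by (intro prod.cong) auto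
  then show "c S * (\<Prod>i\<in>S. (x(n:=y)) i) = c S * (\<Prod>i\<in>S. x i)" by simp
qed

lemma mp_zero: "multilinear_poly m 0 c x = c {}"
proof -
  have "{S. S \<subseteq> {..<m} \<and> card S \<le> 0} = {{}}"
    using finite_subset by fastforce
  then show ?thesis unfolding multilinear_poly_def by simp
qed

lemma mp_base: "multilinear_poly 0 d c x = c {}"
proof -
  have "{S. S \<subseteq> {..<0::nat} \<and> card S \<le> d} = {{}}" by auto
  then show ?thesis unfolding multilinear_poly_def by simp
qed

lemma mp_split:
  "multilinear_poly (Suc n) (Suc e) c x =
     multilinear_poly n (Suc e) c x + x n * multilinear_poly n e (\<lambda>T. c (insert n T)) x"
proof -
  let ?L = "{S. S \<subseteq> {..<n} \<and> card S \<le> Suc e}"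
  let ?R = "{T. T \<subseteq> {..<n} \<and> card T \<le> e}"
  have fin: "finite ?L" "finite ?R"
    by (rule finite_subset[of _ "Pow {..<n}"]; auto)+
  have seteq: "{S. S \<subseteq> {..<Suc n} \<and> card S \<le> Suc e} = ?L \<union> insert n ` ?R"
  proof (intro equalityI subsetI)
    fix S assume S: "S \<in> {S. S \<subseteq> {..<Suc n} \<and> card S \<le> Suc e}"
    have fS: "finite S" using S finite_subset by blast
    show "S \<in> ?L \<union> insert n ` ?R"
    proof (cases "n \<in> S")
      case True
      then have "S = insert n (S - {n})" by auto
      moreover have "S - {n} \<in> ?R" using S True fS
        by (auto simp: card_Diff_singleton less_Suc_eq)
      ultimately show ?thesis by blast
    next
      case False
      then have "S \<in> ?L" using S by (auto simp: less_Suc_eq)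
      then show ?thesis by blast
    qed
  next
    fix S assume "S \<in> ?L \<union> insert n ` ?R"
    then show "S \<in> {S. S \<subseteq> {..<Suc n} \<and> card S \<le> Suc e}"
    proof
      assume "S \<in> ?L" then show ?thesis by auto
    next
      assume "S \<in> insert n ` ?R"
      then obtain T where T: "T \<in> ?R" "S = insert n T" by blast
      have "finite T" "n \<notin> T" using T finite_subset by auto
      then show ?thesis using T by auto
    qed
  qed
  have disj: "?L \<inter> insert n ` ?R = {}" by auto
  have inj: "inj_on (insert n) ?R"
  proof (rule inj_onI)
    fix T1 T2 assume T: "T1 \<in> ?R" "T2 \<in> ?R" "insert n T1 = insert n T2"
    then have "n \<notin> T1" "n \<notin> T2" by auto
    then have "T1 = insert n T1 - {n}" "T2 = insert n T2 - {n}" by auto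
    then show "T1 = T2" using T(3) by simp
  qed
  have "multilinear_poly (Suc n) (Suc e) c x =
      (\<Sum>S\<in>?L. c S * (\<Prod>i\<in>S. x i)) + (\<Sum>S\<in>insert n ` ?R. c S * (\<Prod>i\<in>S. x i))"
    unfolding multilinear_poly_def seteq
    by (rule sum.union_disjoint) (use fin disj in auto)
  also have "(\<Sum>S\<in>insert n ` ?R. c S * (\<Prod>i\<in>S. x i)) =
      (\<Sum>T\<in>?R. c (insert n T) * (\<Prod>i\<in>insert n T. x i))"
    by (rule sum.reindex_cong[OF inj refl]) simp
  also have "\<dots> = (\<Sum>T\<in>?R. x n * (c (insert n T) * (\<Prod>i\<in>T. x i)))"
  proof (rule sum.cong[OF refl])
    fix T assume "T \<in> ?R"
    then have "finite T" "n \<notin> T" using finite_subset by auto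
    then show "c (insert n T) * (\<Prod>i\<in>insert n T. x i) = x n * (c (insert n T) * (\<Prod>i\<in>T. x i))"
      by simp
  qed
  finally show ?thesis unfolding multilinear_poly_def by (simp add: sum_distrib_left)
qed

lemma quad_step:
  assumes fin: "finite (set_pmf X)" and m1: "EE X (\<lambda>y. y) = 0" and m2: "EE X (\<lambda>y. y\<^sup>2) = 1"
  shows "EE X (\<lambda>y. (g + y * h)\<^sup>2) = g\<^sup>2 + h\<^sup>2"
proof -
  have "(\<lambda>y. (g + y * h)\<^sup>2) = (\<lambda>y. g\<^sup>2 + ((2*g*h) * y + h\<^sup>2 * y\<^sup>2))"
    by (auto simp: power2_eq_square algebra_simps)
  then show ?thesis using fin m1 m2 by (simp add: ee_add ee_cmult)
qed

lemma quart_step: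
  assumes fin: "finite (set_pmf X)" and m1: "EE X (\<lambda>y. y) = 0" and m2: "EE X (\<lambda>y. y\<^sup>2) = 1"
  shows "EE X (\<lambda>y. (g + y * h)^4) \<le> g^4 + 7 * (g\<^sup>2 * h\<^sup>2) + 5 * EE X (\<lambda>y. y^4) * h^4"
proof -
  have pw: "(g + y * h)^4 \<le> g^4 + ((4*g^3*h) * y + ((7*g\<^sup>2*h\<^sup>2) * y\<^sup>2 + (5*h^4) * y^4))" for y
  proof -
    have "g^4 + ((4*g^3*h) * y + ((7*g\<^sup>2*h\<^sup>2) * y\<^sup>2 + (5*h^4) * y^4)) - (g + y * h)^4
        = (g*h*y - 2*h\<^sup>2*y\<^sup>2)\<^sup>2"
      by (simp add: eval_nat_numeral algebra_simps)
    moreover have "0 \<le> (g*h*y - 2*h\<^sup>2*y\<^sup>2)\<^sup>2" by simp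
    ultimately show ?thesis by linarith
  qed
  have "EE X (\<lambda>y. (g + y * h)^4) \<le> EE X (\<lambda>y. g^4 + ((4*g^3*h) * y + ((7*g\<^sup>2*h\<^sup>2) * y\<^sup>2 + (5*h^4) * y^4)))"
    by (rule ee_mono[OF fin pw])
  also have "\<dots> = g^4 + 7 * (g\<^sup>2 * h\<^sup>2) + 5 * EE X (\<lambda>y. y^4) * h^4"
    using fin m1 m2 by (simp add: ee_add ee_cmult)
  finally show ?thesis .
qed

lemma arith_step:
  fixes L K G H A B Q m :: real
  assumes "0 \<le> L" "7/2 \<le> K" "0 \<le> G" "0 \<le> H" "A \<le> L*K\<^sup>2*G\<^sup>2" "B \<le> L*H\<^sup>2" "0 \<le> A" "0 \<le> B"
    "Q\<^sup>2 \<le> A*B" "0 \<le> m" "m \<le> K\<^sup>2"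
  shows "A + 7*Q + m*B \<le> L*K\<^sup>2*(G+H)\<^sup>2"
proof -
  have K0: "0 \<le> K" using assms(2) by linarith
  have R0: "0 \<le> L*K*G*H" using assms(1,3,4) K0 by simp
  have "A*B \<le> (L*K\<^sup>2*G\<^sup>2) * (L*H\<^sup>2)"
    by (rule mult_mono) (use assms in simp_all)
  also have "\<dots> = (L*K*G*H)\<^sup>2" by (simp add: power2_eq_square algebra_simps)
  finally have "Q\<^sup>2 \<le> (L*K*G*H)\<^sup>2" using assms(9) by linarith
  then have Q: "Q \<le> L*K*G*H" using R0 by (rule power2_le_imp_le)
  have mB: "m*B \<le> K\<^sup>2 * (L*H\<^sup>2)"
    by (rule mult_mono) (use assms in simp_all)
  have s: "7 * (L*K*G*H) \<le> 2 * K * (L*K*G*H)"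
    by (rule mult_right_mono) (use assms R0 in simp_all)
  have e: "L*K\<^sup>2*(G+H)\<^sup>2 = L*K\<^sup>2*G\<^sup>2 + 2 * K * (L*K*G*H) + K\<^sup>2 * (L*H\<^sup>2)"
    by (simp add: power2_eq_square algebra_simps)
  show ?thesis using assms(5) Q mB s e by linarith
qed

lemma bonami:
  assumes fin: "finite (set_pmf X)" and m1: "EE X (\<lambda>y. y) = 0" and m2: "EE X (\<lambda>y. y\<^sup>2) = 1"
    and K: "7/2 \<le> K" and m4: "5 * EE X (\<lambda>y. y^4) \<le> K\<^sup>2"
  shows "EE (prod_dist X n) (\<lambda>x. (multilinear_poly n d c x)^4)
          \<le> K^(2*d) * (EE (prod_dist X n) (\<lambda>x. (multilinear_poly n d c x)\<^sup>2))\<^sup>2"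
proof (induction n arbitrary: d c)
  case 0
  have "1 \<le> K^(2*d)" using K by (intro one_le_power) simp
  from mult_right_mono[OF this, of "(c {})^4"]
  have "(c {})^4 \<le> K^(2*d) * (c {})^4" by simp
  moreover have "((c {})\<^sup>2)\<^sup>2 = (c {})^4" by (simp flip: power_mult)
  ultimately show ?case by (simp add: mp_base)
next
  case (Suc n)
  have finP: "finite (set_pmf (prod_dist X n))" by (rule finite_prod_dist[OF fin])
  have finP': "finite (set_pmf (prod_dist X (Suc n)))" by (rule finite_prod_dist[OF fin])
  show ?case
  proof (cases d)
    case 0
    have "1 \<le> K^(2*d)" using K by (intro one_le_power) simp
    from mult_right_mono[OF this, of "(c {})^4"]
    have "(c {})^4 \<le> K^(2*d) * (c {})^4" by simp
    moreover have "((c {})\<^sup>2)\<^sup>2 = (c {})^4" by (simp flip: power_mult)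
    ultimately show ?thesis using 0 by (simp add: mp_zero)
  next
    case (Suc e)
    define g where "g = (\<lambda>x. multilinear_poly n (Suc e) c x)"
    define h where "h = (\<lambda>x. multilinear_poly n e (\<lambda>T. c (insert n T)) x)"
    have f: "multilinear_poly (Suc n) (Suc e) c (x(n:=y)) = g x + y * h x" for x y
      using mp_split[of n e c "x(n:=y)"] by (simp add: g_def h_def mp_upd)
    have E2: "EE (prod_dist X (Suc n)) (\<lambda>x. (multilinear_poly (Suc n) (Suc e) c x)\<^sup>2)
        = EE (prod_dist X n) (\<lambda>x. (g x)\<^sup>2) + EE (prod_dist X n) (\<lambda>x. (h x)\<^sup>2)"
      by (simp add: prod_dist_step[OF fin] f quad_step[OF fin m1 m2] ee_add[OF finP])
    have "EE (prod_dist X (Suc n)) (\<lambda>x. (multilinear_poly (Suc n) (Suc e) c x)^4)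
        = EE (prod_dist X n) (\<lambda>x. EE X (\<lambda>y. (g x + y * h x)^4))"
      by (simp add: prod_dist_step[OF fin] f)
    also have "\<dots> \<le> EE (prod_dist X n) (\<lambda>x. (g x)^4 + 7 * ((g x)\<^sup>2 * (h x)\<^sup>2) + 5 * EE X (\<lambda>y. y^4) * (h x)^4)"
      by (rule ee_mono[OF finP quart_step[OF fin m1 m2]])
    also have "\<dots> = EE (prod_dist X n) (\<lambda>x. (g x)^4) + 7 * EE (prod_dist X n) (\<lambda>x. (g x)\<^sup>2 * (h x)\<^sup>2)
        + (5 * EE X (\<lambda>y. y^4)) * EE (prod_dist X n) (\<lambda>x. (h x)^4)"
      by (simp add: ee_add[OF finP] ee_cmult[OF finP] mult.assoc)
    finally have E4: "EE (prod_dist X (Suc n)) (\<lambda>x. (multilinear_poly (Suc n) (Suc e) c x)^4)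
       \<le> EE (prod_dist X n) (\<lambda>x. (g x)^4) + 7 * EE (prod_dist X n) (\<lambda>x. (g x)\<^sup>2 * (h x)\<^sup>2)
        + (5 * EE X (\<lambda>y. y^4)) * EE (prod_dist X n) (\<lambda>x. (h x)^4)" .
    have IHg: "EE (prod_dist X n) (\<lambda>x. (g x)^4) \<le> K^(2*Suc e) * (EE (prod_dist X n) (\<lambda>x. (g x)\<^sup>2))\<^sup>2"
      unfolding g_def by (rule Suc.IH)
    have IHh: "EE (prod_dist X n) (\<lambda>x. (h x)^4) \<le> K^(2*e) * (EE (prod_dist X n) (\<lambda>x. (h x)\<^sup>2))\<^sup>2"
      unfolding h_def by (rule Suc.IH)
    have CS: "(EE (prod_dist X n) (\<lambda>x. (g x)\<^sup>2 * (h x)\<^sup>2))\<^sup>2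
        \<le> EE (prod_dist X n) (\<lambda>x. (g x)^4) * EE (prod_dist X n) (\<lambda>x. (h x)^4)"
      using ee_CS[OF finP, of "\<lambda>x. (g x)\<^sup>2" "\<lambda>x. (h x)\<^sup>2"] by (simp flip: power_mult)
    have Kpow: "K^(2*Suc e) = K^(2*e) * K\<^sup>2"
    proof -
      have "2 * Suc e = 2*e + 2" by simp
      then show ?thesis by (simp only: power_add)
    qed
    have "EE (prod_dist X n) (\<lambda>x. (g x)^4) + 7 * EE (prod_dist X n) (\<lambda>x. (g x)\<^sup>2 * (h x)\<^sup>2)
        + (5 * EE X (\<lambda>y. y^4)) * EE (prod_dist X n) (\<lambda>x. (h x)^4)
       \<le> K^(2*e) * K\<^sup>2 * (EE (prod_dist X n) (\<lambda>x. (g x)\<^sup>2) + EE (prod_dist X n) (\<lambda>x. (h x)\<^sup>2))\<^sup>2"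
    proof (rule arith_step[OF _ K _ _ _ IHh _ _ CS _ m4])
      show "0 \<le> K ^ (2 * e)" using K by simp
      show "EE (prod_dist X n) (\<lambda>x. (g x)^4) \<le> K^(2*e) * K\<^sup>2 * (EE (prod_dist X n) (\<lambda>x. (g x)\<^sup>2))\<^sup>2"
        using IHg unfolding Kpow .
    qed (auto intro!: ee_nonneg[OF finP] ee_nonneg[OF fin])
    note fin_ineq = this
    show ?thesis unfolding Suc E2 Kpow by (rule order_trans[OF E4 fin_ineq])
  qed
qed

theorem corollary4p7:
  fixes X :: "real pmf" and n d :: nat and f :: "(nat \<Rightarrow> real) \<Rightarrow> real"
  assumes "finite (set_pmf X)"
    and "measure_pmf.expectation X (\<lambda>x. x) = 0"
    and "measure_pmf.variance X (\<lambda>x. x) = 1"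
    and "d \<ge> 1"
    and "is_multilinear_deg_le n d f"
    and "L2_norm X n f = 1"
  shows "measure_pmf.expectation (prod_dist X n)
           (\<lambda>x. (f x)^2 * (if \<bar>f x\<bar> > (2 * exp 1 / min_atom X) ^ d then 1 else 0)) \<le> (0.52::real)"
proof -
  note fin = assms(1) and m1 = assms(2)
  have finP: "finite (set_pmf (prod_dist X n))" by (rule finite_prod_dist[OF fin])
  obtain c where fc: "\<forall>x. f x = multilinear_poly n d c x"
    using assms(5) unfolding is_multilinear_deg_le_def by blast
  have m2: "EE X (\<lambda>y. y\<^sup>2) = 1"
    using assms(3) m1 by simp
  define lam where "lam = min_atom X"
  have ne: "set_pmf X \<noteq> {}" by (rule set_pmf_not_empty)
  have lam_in: "lam \<in> pmf X ` set_pmf X"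
    unfolding lam_def min_atom_def by (rule Min_in) (use fin ne in auto)
  have lam_le: "lam \<le> pmf X y" if "y \<in> set_pmf X" for y
    unfolding lam_def min_atom_def by (rule Min_le) (use fin that in auto)
  have lam_pos: "0 < lam" using lam_in by (auto simp: set_pmf_iff pmf_nonneg order_le_neq_trans)
  have lam1: "lam \<le> 1" using lam_in by (auto simp: pmf_le_1)
  have ysq: "y\<^sup>2 \<le> 1 / lam" if y: "y \<in> set_pmf X" for y
  proof -
    have "pmf X y * y\<^sup>2 \<le> (\<Sum>z\<in>set_pmf X. z\<^sup>2 * pmf X z)"
      using member_le_sum[of y "set_pmf X" "\<lambda>z. z\<^sup>2 * pmf X z"] y fin by (simp add: mult.commute)
    also have "\<dots> = 1" using m2 fin by (simp add: ee_sum)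
    finally have "pmf X y * y\<^sup>2 \<le> 1" .
    moreover have "lam * y\<^sup>2 \<le> pmf X y * y\<^sup>2" using lam_le[OF y] by (simp add: mult_right_mono)
    ultimately have "lam * y\<^sup>2 \<le> 1" by linarith
    then show ?thesis using lam_pos by (simp add: field_simps)
  qed
  have "EE X (\<lambda>y. y^4) \<le> EE X (\<lambda>y. (1/lam) * y\<^sup>2)"
  proof (rule ee_mono[OF fin])
    fix y assume y: "y \<in> set_pmf X"
    have "y^4 = y\<^sup>2 * y\<^sup>2" by (simp add: power2_eq_square eval_nat_numeral)
    also have "\<dots> \<le> (1/lam) * y\<^sup>2" by (rule mult_right_mono[OF ysq[OF y]]) simp
    finally show "y^4 \<le> (1/lam) * y\<^sup>2" .
  qed
  also have "\<dots> = 1/lam" using fin m2 by (simp add: ee_cmult)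
  finally have m4: "EE X (\<lambda>y. y^4) \<le> 1/lam" .
  define C where "C = max (49/4) (5/lam)"
  define K where "K = sqrt C"
  have C0: "0 \<le> C" unfolding C_def by simp
  have KC: "K\<^sup>2 = C" unfolding K_def using C0 by simp
  have K: "7/2 \<le> K"
  proof -
    have "sqrt (49/4) \<le> K" unfolding K_def C_def by (rule real_sqrt_le_mono) simp
    moreover have "sqrt (49/4) = (7/2::real)" by (rule real_sqrt_unique) (auto simp: power2_eq_square)
    ultimately show ?thesis by simp
  qed
  have K4: "5 * EE X (\<lambda>y. y^4) \<le> K\<^sup>2" 
  proof -
    have "5 * EE X (\<lambda>y. y^4) \<le> 5 * (1/lam)" using m4 by simp
    also have "\<dots> \<le> C" unfolding C_def by simp
    finally show ?thesis unfolding KC .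
  qed
  have Ef2: "EE (prod_dist X n) (\<lambda>x. (f x)\<^sup>2) = 1"
    using assms(6) unfolding L2_norm_def
    by (metis real_sqrt_eq_1_iff)
  have Ef4: "EE (prod_dist X n) (\<lambda>x. (f x)^4) \<le> C^d"
  proof -
    have "EE (prod_dist X n) (\<lambda>x. (multilinear_poly n d c x)^4)
        \<le> K^(2*d) * (EE (prod_dist X n) (\<lambda>x. (multilinear_poly n d c x)\<^sup>2))\<^sup>2"
      by (rule bonami[OF fin m1 m2 K K4])
    moreover have "K^(2*d) = C^d" by (simp add: power_mult KC)
    ultimately show ?thesis using Ef2 fc by simp
  qed
  define t where "t = (2 * exp 1 / min_atom X) ^ d"
  have tpos: "0 < t" unfolding t_def using lam_pos lam_def by simp
  have "EE (prod_dist X n) (\<lambda>x. (f x)^2 * (if \<bar>f x\<bar> > t then 1 else 0))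
      \<le> EE (prod_dist X n) (\<lambda>x. (1 / t\<^sup>2) * (f x)^4)"
  proof (rule ee_mono[OF finP])
    fix x
    show "(f x)^2 * (if \<bar>f x\<bar> > t then 1 else 0) \<le> (1 / t\<^sup>2) * (f x)^4"
    proof (cases "\<bar>f x\<bar> > t")
      case True
      have "t\<^sup>2 \<le> \<bar>f x\<bar>\<^sup>2" by (rule power_mono) (use True tpos in auto)
      then have "t\<^sup>2 \<le> (f x)\<^sup>2" by simp
      then have "t\<^sup>2 * (f x)\<^sup>2 \<le> (f x)\<^sup>2 * (f x)\<^sup>2" by (rule mult_right_mono) simp_all
      then have "(f x)\<^sup>2 \<le> (1 / t\<^sup>2) * ((f x)\<^sup>2 * (f x)\<^sup>2)" using tpos
        by (simp add: field_simps)
      moreover have h4: "(f x)^4 = (f x)\<^sup>2 * (f x)\<^sup>2" by (simp add: eval_nat_numeral)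
      ultimately have "(f x)\<^sup>2 \<le> (1 / t\<^sup>2) * (f x)^4" by (simp only: h4)
      then show ?thesis using True by simp
    qed simp
  qed
  also have "\<dots> = (1 / t\<^sup>2) * EE (prod_dist X n) (\<lambda>x. (f x)^4)" by (rule ee_cmult[OF finP])
  also have "\<dots> \<le> (1 / t\<^sup>2) * C^d" using Ef4 tpos by (intro mult_left_mono) simp_all
  also have "\<dots> = (C / (2 * exp 1 / lam)\<^sup>2) ^ d"
  proof -
    have tt: "t\<^sup>2 = ((2 * exp 1 / lam)\<^sup>2)^d" unfolding t_def lam_def
      by (simp flip: power_mult add: mult.commute)
    have "(1 / t\<^sup>2) * C^d = C^d / t\<^sup>2" by simp
    also have "\<dots> = (C / (2 * exp 1 / lam)\<^sup>2) ^ d" unfolding tt power_divide by (rule refl)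
    finally show ?thesis .
  qed
  also have "\<dots> \<le> C / (2 * exp 1 / lam)\<^sup>2"
  proof -
    define q where "q = C / (2 * exp 1 / lam)\<^sup>2"
    have q_eq: "q = C * lam\<^sup>2 / (4 * (exp 1)\<^sup>2)" unfolding q_def using lam_pos
      by (simp add: field_simps power2_eq_square)
    have "C * lam\<^sup>2 \<le> 49/4"
    proof -
      have "49/4 * lam\<^sup>2 \<le> 49/4" using lam1 lam_pos by (simp add: power_le_one)
      moreover have "5 / lam * lam\<^sup>2 \<le> 49/4" using lam1 lam_pos by (simp add: power2_eq_square)
      ultimately show ?thesis unfolding C_def by (simp add: max_def)
    qed
    moreover have e52: "(5/2::real) \<le> exp 1"
      using exp_lower_Taylor_quadratic[of 1] by simp
    have "(5/2::real)\<^sup>2 \<le> (exp 1)\<^sup>2" by (rule power_mono[OF e52]) simp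
    then have "(25/4::real) \<le> (exp 1)\<^sup>2" by (simp add: power2_eq_square)
    ultimately have "q \<le> 49/100" unfolding q_eq using lam_pos by (simp add: field_simps)
    moreover have "0 \<le> q" unfolding q_def using C0 by simp
    ultimately have "q ^ d \<le> q ^ 1" by (intro power_decreasing) (use assms(4) in auto)
    then show ?thesis unfolding q_def by simp
  qed
  also have "\<dots> \<le> 0.52"
  proof -
    have "C * lam\<^sup>2 \<le> 49/4"
    proof -
      have "49/4 * lam\<^sup>2 \<le> 49/4" using lam1 lam_pos by (simp add: power_le_one)
      moreover have "5 / lam * lam\<^sup>2 \<le> 49/4" using lam1 lam_pos by (simp add: power2_eq_square)
      ultimately show ?thesis unfolding C_def by (simp add: max_def)
    qed
    moreover have e52: "(5/2::real) \<le> exp 1"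
      using exp_lower_Taylor_quadratic[of 1] by simp
    have "(5/2::real)\<^sup>2 \<le> (exp 1)\<^sup>2" by (rule power_mono[OF e52]) simp
    then have "(25/4::real) \<le> (exp 1)\<^sup>2" by (simp add: power2_eq_square)
    ultimately show ?thesis using lam_pos by (simp add: field_simps power2_eq_square)
  qed
  finally show ?thesis unfolding t_def .
qed

end
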